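(* Let $A,B\subseteq R_n$ be such that $\{j:\alpha^j\in A\}$ and $\{j:\alpha^j\in B\}$ are unions of $q$-cyclotomic cosets modulo $n$, and let $C_A$, $C_B$ be the cyclic codes of length $n$ over $\mathbb{F}_q$ with complete defining sets $A$, $B$ respectively. Let $d_A^{\perp}$ be the minimum distance of the dual of $C_A$ and $d_B$ the minimum distance of $C_B$, and suppose $d_A^{\perp}>d_B$. Then $\{j:\alpha^j\in AB\}$ is a union of $q$-cyclotomic cosets modulo $n$, and the cyclic code $C_{AB}$ of length $n$ over $\mathbb{F}_q$ with complete defining set $AB$ has $(d_A^{\perp}-d_B+1,\,d_B)$-locality.
   Context: Let $q$ be a prime power and $n$ a positive integer with $\gcd(n,q)=1$. Let $d$ be the multiplicative order of $q$ modulo $n$, $\alpha\in\mathbb{F}_{q^d}$ a primitive $n$-th root of unity, and $R_n=\{\alpha^j:0\le j\le n-1\}$. For $A,B\subseteq R_n$, $AB=\{\beta\gamma:\beta\in A,\gamma\in B\}$. If $Z\subseteq R_n$ is such that $\{j:\alpha^j\in Z\}$ is a union of $q$-cyclotomic cosets modulo $n$, the cyclic code of length $n$ over $\mathbb{F}_q$ with complete defining set $Z$ is the ideal generated by $\prod_{\beta\in Z}(x-\beta)\in\mathbb{F}_q[x]$ in $\mathbb{F}_q[x]/(x^n-1)$, identified with a subspace of $\mathbb{F}_q^n$ via coefficient vectors. Locality: for a linear code $C\subseteq\mathbb{F}^n$ and integers $r\ge1$, $\delta\ge2$, the $i$-th coordinate has $(r,\delta)$-locality if there is $S_i\subseteq\{1,\dots,n\}$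 with $i\in S_i$, $|S_i|\le r+\delta-1$ such that the punctured code $C|_{S_i}$ (restrictions of codewords to $S_i$) has minimum distance at least $\delta$ (the zero code having infinite minimum distance); $C$ has $(r,\delta)$-locality if every coordinate does. *)

theory Defs
  imports "HOL-Number_Theory.Number_Theory" "HOL-Computational_Algebra.Polynomial"
    "HOL-Library.Extended_Nat"
begin

definition field_embedding :: "('f::field \<Rightarrow> 'e::field) \<Rightarrow> bool" where
  "field_embedding emb \<longleftrightarrow> emb 1 = 1 \<and> (\<forall>x y. emb (x + y) = emb x + emb y)
      \<and> (\<forall>x y. emb (x * y) = emb x * emb y)"

definition roots_set :: "'e::field \<Rightarrow> nat \<Rightarrow> 'e set" where
  "roots_set \<alpha> n = {\<alpha> ^ j | j. j < n}"

definition exps :: "'e::field \<Rightarrow> nat \<Rightarrow> 'e set \<Rightarrow> nat set" where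
  "exps \<alpha> n Z = {j. j < n \<and> \<alpha> ^ j \<in> Z}"

text \<open>A subset of {0..n-1} is a union of q-cyclotomic cosets mod n iff closed under j -> q j mod n.\<close>
definition cyclotomic_union :: "nat \<Rightarrow> nat \<Rightarrow> nat set \<Rightarrow> bool" where
  "cyclotomic_union q n J \<longleftrightarrow> J \<subseteq> {..<n} \<and> (\<forall>j\<in>J. (q * j) mod n \<in> J)"

definition set_prod :: "'e::field set \<Rightarrow> 'e set \<Rightarrow> 'e set" where
  "set_prod A B = {\<beta> * \<gamma> | \<beta> \<gamma>. \<beta> \<in> A \<and> \<gamma> \<in> B}"

text \<open>Vectors in F^n are functions nat => F vanishing outside {0..<n}; coordinate i corresponds
  to the coefficient of x^i.\<close>
definition vecs :: "nat \<Rightarrow> (nat \<Rightarrow> 'f::zero) set" where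
  "vecs n = {v. \<forall>i\<ge>n. v i = 0}"

definition vec_poly :: "nat \<Rightarrow> (nat \<Rightarrow> 'f::comm_ring_1) \<Rightarrow> 'f poly" where
  "vec_poly n v = (\<Sum>i<n. monom (v i) i)"

text \<open>The cyclic code of length n over F_q with complete defining set Z: the ideal generated by
  g = prod_{beta in Z} (x - beta) (a polynomial over F_q, i.e. g = map_poly emb g') in
  F_q[x]/(x^n - 1), each residue class represented by its unique representative of degree < n.\<close>
definition cyclic_code :: "('f::field \<Rightarrow> 'e::field) \<Rightarrow> nat \<Rightarrow> 'e set \<Rightarrow> (nat \<Rightarrow> 'f) set" where
  "cyclic_code emb n Z = {v \<in> vecs n. \<exists>g' h. map_poly emb g' = (\<Prod>\<beta>\<in>Z. [:-\<beta>, 1:])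
      \<and> vec_poly n v = (h * g') mod (monom 1 n - 1)}"

definition dual_code :: "nat \<Rightarrow> (nat \<Rightarrow> 'f::field) set \<Rightarrow> (nat \<Rightarrow> 'f) set" where
  "dual_code n C = {u \<in> vecs n. \<forall>c\<in>C. (\<Sum>i<n. u i * c i) = 0}"

definition hamming :: "nat \<Rightarrow> (nat \<Rightarrow> 'f) \<Rightarrow> (nat \<Rightarrow> 'f) \<Rightarrow> nat" where
  "hamming n x y = card {i. i < n \<and> x i \<noteq> y i}"

text \<open>Minimum distance; the infimum over the empty set is infinity (zero code).\<close>
definition min_dist :: "nat \<Rightarrow> (nat \<Rightarrow> 'f) set \<Rightarrow> enat" where
  "min_dist n C = (INF x\<in>C. INF y\<in>C - {x}. enat (hamming n x y))"

text \<open>Punctured code C|_S: coordinates outside S are zeroed out, so distances count only S.\<close>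
definition puncture :: "(nat \<Rightarrow> 'f::zero) set \<Rightarrow> nat set \<Rightarrow> (nat \<Rightarrow> 'f) set" where
  "puncture C S = (\<lambda>v i. if i \<in> S then v i else 0) ` C"

definition has_locality :: "nat \<Rightarrow> (nat \<Rightarrow> 'f::zero) set \<Rightarrow> nat \<Rightarrow> nat \<Rightarrow> bool" where
  "has_locality n C r \<delta> \<longleftrightarrow> (\<forall>i<n. \<exists>S. S \<subseteq> {..<n} \<and> i \<in> S \<and> card S \<le> r + \<delta> - 1
      \<and> min_dist n (puncture C S) \<ge> enat \<delta>)"

end

theory Submission
  imports Defs
begin

context
  fixes emb :: "'f::field \<Rightarrow> 'e::field"
  assumes hom: "field_embedding emb"
begin

lemma emb_add: "emb (x + y) = emb x + emb y" using hom unfolding field_embedding_def by blast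
lemma emb_mult: "emb (x * y) = emb x * emb y" using hom unfolding field_embedding_def by blast
lemma emb_1: "emb 1 = 1" using hom unfolding field_embedding_def by blast
lemma emb_0: "emb 0 = 0"
proof -
  have "emb (0 + 0) = emb 0 + emb 0" by (rule emb_add)
  then show ?thesis by (metis add_cancel_right_right)
qed
lemma emb_uminus: "emb (- x) = - emb x"
proof -
  have "emb (x + - x) = emb x + emb (- x)" by (rule emb_add)
  then show ?thesis by (simp add: emb_0 eq_neg_iff_add_eq_0 add.commute)
qed
lemma emb_diff: "emb (x - y) = emb x - emb y"
  using emb_add[of x "-y"] emb_uminus[of y] by simp
lemma emb_sum: "emb (sum f A) = (\<Sum>a\<in>A. emb (f a))"
  by (induction A rule: infinite_finite_induct) (auto simp: emb_0 emb_add)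
lemma emb_eq_0: "emb x = 0 \<longleftrightarrow> x = 0"
proof
  assume h: "emb x = 0"
  show "x = 0"
  proof (rule ccontr)
    assume "x \<noteq> 0"
    then have "emb (x * inverse x) = 1" by (simp add: emb_1)
    then show False using h by (simp add: emb_mult)
  qed
qed (simp add: emb_0)
lemma emb_inj: "emb x = emb y \<longleftrightarrow> x = y"
  using emb_eq_0[of "x - y"] by (simp add: emb_diff)
lemma emb_of_nat: "emb (of_nat m) = of_nat m"
  by (induction m) (auto simp: emb_0 emb_1 emb_add)

lemma coeff_mp: "coeff (map_poly emb p) i = emb (coeff p i)"
  by (simp add: coeff_map_poly emb_0)

lemma mp_add: "map_poly emb (p + q) = map_poly emb p + map_poly emb q"
  by (simp add: poly_eq_iff coeff_mp emb_add)
lemma mp_diff: "map_poly emb (p - q) = map_poly emb p - map_poly emb q"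
  by (simp add: poly_eq_iff coeff_mp emb_diff)
lemma mp_mult: "map_poly emb (p * q) = map_poly emb p * map_poly emb q"
  by (simp add: poly_eq_iff coeff_mp coeff_mult emb_sum emb_mult)
lemma mp_sum: "map_poly emb (sum f A) = (\<Sum>a\<in>A. map_poly emb (f a))"
  by (induction A rule: infinite_finite_induct) (auto simp: mp_add)
lemma mp_monom: "map_poly emb (monom c k) = monom (emb c) k"
  by (simp add: map_poly_monom emb_0)
lemma mp_eq_0: "map_poly emb p = 0 \<longleftrightarrow> p = 0"
  by (simp add: poly_eq_iff coeff_mp emb_eq_0)
lemma mp_degree: "degree (map_poly emb p) = degree p"
  by (rule degree_map_poly) (simp add: emb_eq_0)

end

lemma geo0: fixes z :: "'e::field" assumes "z ^ n = 1" "z \<noteq> 1" shows "(\<Sum>k<n. z ^ k) = 0"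
  using geometric_sum[OF assms(2), of n] assms(1) by simp

context
  fixes \<alpha> :: "'e::field" and n :: nat
  assumes an: "\<alpha> ^ n = 1" and prim: "\<forall>k. 0 < k \<and> k < n \<longrightarrow> \<alpha> ^ k \<noteq> 1"
    and nz: "(of_nat n :: 'e) \<noteq> 0"
begin

lemma a_nz: "\<alpha> \<noteq> 0"
  using an nz by (cases n) auto

lemma pow_inj: assumes "i < n" "j < n" "\<alpha> ^ i = \<alpha> ^ j" shows "i = j"
proof (rule ccontr)
  assume ne: "i \<noteq> j"
  have key: "\<alpha> ^ a = \<alpha> ^ b \<Longrightarrow> a < b \<Longrightarrow> b < n \<Longrightarrow> False" for a b
  proof -
    assume h: "\<alpha> ^ a = \<alpha> ^ b" "a < b" "b < n"
    have "\<alpha> ^ b = \<alpha> ^ a * \<alpha> ^ (b - a)" using h(2) by (simp flip: power_add)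
    then have "\<alpha> ^ (b - a) = 1" using h(1) a_nz by simp
    then show False using prim h by auto
  qed
  show False using ne assms key[of i j] key[of j i] by (cases "i < j") auto
qed

lemma orth:
  assumes "i < n" "j < n"
  shows "(\<Sum>k<n. (\<alpha> ^ i * inverse \<alpha> ^ j) ^ k) = (if i = j then of_nat n else 0)"
proof (cases "i = j")
  case True
  then show ?thesis using a_nz by (simp add: power_inverse)
next
  case False
  let ?z = "\<alpha> ^ i * inverse \<alpha> ^ j"
  have "?z ^ n = (\<alpha> ^ n) ^ i * inverse ((\<alpha> ^ n) ^ j)"
    by (simp add: power_mult_distrib power_inverse flip: power_mult) (simp add: mult.commute)
  then have zn: "?z ^ n = 1" using an by simp
  have "?z \<noteq> 1"
  proof
    assume "?z = 1"
    then have "\<alpha> ^ i = \<alpha> ^ j" using a_nz by (simp add: power_inverse field_simps)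
    then show False using pow_inj assms False by blast
  qed
  then show ?thesis using geo0[OF zn] False by simp
qed

lemma dft_inv:
  fixes y :: "nat \<Rightarrow> 'e"
  assumes "j < n"
  shows "(\<Sum>k<n. (\<Sum>i<n. y i * \<alpha> ^ (i * k)) * inverse \<alpha> ^ (j * k)) = of_nat n * y j"
proof -
  have "(\<Sum>k<n. (\<Sum>i<n. y i * \<alpha> ^ (i * k)) * inverse \<alpha> ^ (j * k))
      = (\<Sum>k<n. \<Sum>i<n. y i * (\<alpha> ^ i * inverse \<alpha> ^ j) ^ k)"
    unfolding sum_distrib_right
  proof (intro sum.cong refl)
    fix k i
    show "y i * \<alpha> ^ (i * k) * inverse \<alpha> ^ (j * k) = y i * (\<alpha> ^ i * inverse \<alpha> ^ j) ^ k"
      by (simp add: power_mult_distrib mult.assoc flip: power_mult)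
  qed
  also have "\<dots> = (\<Sum>i<n. \<Sum>k<n. y i * (\<alpha> ^ i * inverse \<alpha> ^ j) ^ k)"
    by (rule sum.swap)
  also have "\<dots> = (\<Sum>i<n. y i * (\<Sum>k<n. (\<alpha> ^ i * inverse \<alpha> ^ j) ^ k))"
    by (simp add: sum_distrib_left)
  also have "\<dots> = (\<Sum>i<n. y i * (if i = j then of_nat n else 0))"
    using orth assms by simp
  also have "\<dots> = (\<Sum>i<n. (if i = j then of_nat n * y j else 0))"
    by (intro sum.cong) auto
  also have "\<dots> = of_nat n * y j" using assms by simp
  finally show ?thesis .
qed

lemma dft_zero:
  fixes y :: "nat \<Rightarrow> 'e"
  assumes "\<forall>k<n. (\<Sum>i<n. y i * \<alpha> ^ (i * k)) = 0" "j < n"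
  shows "y j = 0"
  using dft_inv[OF assms(2), of y] assms(1) nz by simp

lemma dft_expand:
  fixes y :: "nat \<Rightarrow> 'e"
  assumes "j < n"
  shows "y j = (\<Sum>k<n. (\<Sum>i<n. y i * \<alpha> ^ (i * k)) * inverse \<alpha> ^ (j * k)) / of_nat n"
  using dft_inv[OF assms, of y] nz by simp

end

definition ev :: "('f::field \<Rightarrow> 'e::field) \<Rightarrow> nat \<Rightarrow> (nat \<Rightarrow> 'f) \<Rightarrow> 'e \<Rightarrow> 'e" where
  "ev emb n v \<omega> = (\<Sum>i<n. emb (v i) * \<omega> ^ i)"

lemma pow_mod_n: fixes z :: "'a::comm_monoid_mult" assumes "z ^ n = 1" shows "z ^ (m mod n) = z ^ m"
proof -
  have "z ^ m = z ^ (n * (m div n) + m mod n)" by simp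
  also have "\<dots> = (z ^ n) ^ (m div n) * z ^ (m mod n)" by (simp only: power_add power_mult)
  finally show ?thesis using assms by simp
qed

lemma pow_swap: fixes z :: "'a::comm_monoid_mult" shows "(z ^ j) ^ k = (z ^ k) ^ j"
  by (metis power_mult mult.commute)

lemma pow_mult_swap: fixes z :: "'a::comm_monoid_mult" shows "z ^ (i * k) = (z ^ k) ^ i"
  by (metis power_mult mult.commute)

lemma poly_lt: fixes r :: "'a::comm_ring_1 poly" assumes "degree r < n" shows "poly r x = (\<Sum>i<n. coeff r i * x ^ i)"
proof -
  have "poly r x = (\<Sum>i\<le>degree r. coeff r i * x ^ i)" by (rule poly_altdef)
  also have "\<dots> = (\<Sum>i<n. coeff r i * x ^ i)"
    by (rule sum.mono_neutral_left) (use assms in \<open>auto simp: coeff_eq_0\<close>)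
  finally show ?thesis .
qed

lemma vec_poly_coeff: assumes "degree P < n" shows "vec_poly n (\<lambda>i. coeff P i) = P"
proof -
  have "coeff (vec_poly n (\<lambda>i. coeff P i)) k = coeff P k" for k
  proof -
    have "coeff (vec_poly n (\<lambda>i. coeff P i)) k = (\<Sum>i<n. if i = k then coeff P i else 0)"
      unfolding vec_poly_def coeff_sum coeff_monom by (intro sum.cong) auto
    also have "\<dots> = coeff P k" using assms by (auto simp: coeff_eq_0)
    finally show ?thesis .
  qed
  then show ?thesis by (simp add: poly_eq_iff)
qed

lemma degree_vec_poly: "0 < n \<Longrightarrow> degree (vec_poly n v) < n"
  unfolding vec_poly_def
  by (rule degree_sum_less) (auto intro: le_less_trans[OF degree_monom_le])

lemma degree_M: assumes "0 < n" shows "degree (monom 1 n - 1 :: 'a::field poly) = n"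
proof -
  have "degree (monom 1 n + (- 1) :: 'a poly) = degree (monom 1 n :: 'a poly)"
    by (rule degree_add_eq_left) (use assms in \<open>simp add: degree_monom_eq\<close>)
  then show ?thesis by (simp add: degree_monom_eq)
qed

lemma M_nz: "0 < n \<Longrightarrow> (monom 1 n - 1 :: 'a::field poly) \<noteq> 0"
  by (metis degree_0 degree_M less_not_refl)

lemma degree_mod_M: assumes "0 < n" shows "degree (p mod (monom 1 n - 1 :: 'a::field poly)) < n"
proof -
  have d: "degree (monom 1 n - 1 :: 'a poly) = n" by (rule degree_M[OF assms])
  show ?thesis
    using degree_mod_less[OF M_nz[OF assms], of p] unfolding d using assms by auto
qed

lemma prod_dvd:
  fixes p :: "'e::field poly"
  assumes "finite B" "\<forall>\<beta>\<in>B. poly p \<beta> = 0"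
  shows "(\<Prod>\<beta>\<in>B. [:-\<beta>, 1:]) dvd p"
  using assms
proof (induction B arbitrary: p rule: finite_induct)
  case empty
  then show ?case by simp
next
  case (insert b B p)
  then obtain r where r: "p = (\<Prod>\<beta>\<in>B. [:-\<beta>, 1:]) * r" by (meson dvd_def insertCI)
  have "poly (\<Prod>\<beta>\<in>B. [:-\<beta>, 1:]) b \<noteq> 0"
    using insert(1,2) by (auto simp: poly_prod)
  moreover have "poly p b = 0" using insert by auto
  ultimately have "poly r b = 0" using r by simp
  then have "[:-b, 1:] dvd r" by (simp add: poly_eq_0_iff_dvd)
  then have "[:-b, 1:] * (\<Prod>\<beta>\<in>B. [:-\<beta>, 1:]) dvd r * (\<Prod>\<beta>\<in>B. [:-\<beta>, 1:])"
    by (rule mult_dvd_mono) simp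
  then show ?case using r insert(1,2) by (simp add: mult.commute)
qed

context
  fixes emb :: "'f::field \<Rightarrow> 'e::field"
  assumes hom: "field_embedding emb"
begin

lemma vp_ev: "poly (map_poly emb (vec_poly n v)) \<omega> = ev emb n v \<omega>"
  unfolding vec_poly_def ev_def
  by (simp add: mp_sum[OF hom] mp_monom[OF hom] poly_sum poly_monom)

lemma poly_M: "poly (map_poly emb (monom 1 n - 1)) \<omega> = \<omega> ^ n - 1"
  by (simp add: mp_diff[OF hom] mp_monom[OF hom] emb_1[OF hom] poly_monom)

lemma code_zero:
  assumes "finite Z" "\<forall>\<beta>\<in>Z. \<beta> ^ n = 1" "v \<in> cyclic_code emb n Z" "\<beta> \<in> Z"
  shows "ev emb n v \<beta> = 0"
proof -
  let ?M = "monom 1 n - 1 :: 'f poly"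
  obtain g' h where g: "map_poly emb g' = (\<Prod>\<beta>\<in>Z. [:-\<beta>, 1:])"
    and P: "vec_poly n v = (h * g') mod ?M"
    using assms(3) unfolding cyclic_code_def by blast
  have e: "h * g' = (h * g') div ?M * ?M + vec_poly n v" using P by (simp add: div_mult_mod_eq)
  have "poly (map_poly emb (h * g')) \<beta> = 0"
    using assms(1,4) by (simp add: mp_mult[OF hom] g poly_prod)
  moreover have "poly (map_poly emb ((h * g') div ?M * ?M)) \<beta> = 0"
    using assms(2,4) by (simp add: mp_mult[OF hom] poly_M)
  ultimately have "poly (map_poly emb (vec_poly n v)) \<beta> = 0"
    using arg_cong[OF e, of "\<lambda>p. poly (map_poly emb p) \<beta>"] by (simp add: mp_add[OF hom])
  then show ?thesis by (simp add: vp_ev)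
qed

lemma dvd_transfer:
  assumes "map_poly emb g dvd map_poly emb p"
  shows "g dvd p"
proof -
  have e: "map_poly emb p = map_poly emb g * map_poly emb (p div g) + map_poly emb (p mod g)"
    by (simp flip: mp_mult[OF hom] mp_add[OF hom])
  have d: "map_poly emb g dvd map_poly emb (p mod g)"
    using assms e by (metis dvd_add_right_iff dvd_triv_left)
  show ?thesis
  proof (cases "g = 0")
    case True
    then show ?thesis using assms by (simp add: mp_eq_0[OF hom])
  next
    case False
    show ?thesis
    proof (rule ccontr)
      assume "\<not> g dvd p"
      then have nz: "p mod g \<noteq> 0" by (simp add: mod_eq_0_iff_dvd)
      have "degree (p mod g) < degree g" using degree_mod_less'[OF False nz] .
      moreover have "degree (map_poly emb g) \<le> degree (map_poly emb (p mod g))"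
        using dvd_imp_degree_le[OF d] nz by (simp add: mp_eq_0[OF hom])
      ultimately show False by (simp add: mp_degree[OF hom])
    qed
  qed
qed

lemma code_mem:
  assumes "finite B" "map_poly emb g' = (\<Prod>\<beta>\<in>B. [:-\<beta>, 1:])" "0 < n"
    "v \<in> vecs n" "\<forall>\<beta>\<in>B. ev emb n v \<beta> = 0"
  shows "v \<in> cyclic_code emb n B"
proof -
  let ?M = "monom 1 n - 1 :: 'f poly"
  have "(\<Prod>\<beta>\<in>B. [:-\<beta>, 1:]) dvd map_poly emb (vec_poly n v)"
    using assms(1,5) by (intro prod_dvd) (simp_all add: vp_ev)
  then have "g' dvd vec_poly n v" using assms(2) by (intro dvd_transfer) simp
  then have hg: "vec_poly n v div g' * g' = vec_poly n v" by simp
  have "vec_poly n v mod ?M = vec_poly n v"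
    by (rule mod_poly_less) (simp add: degree_M[OF assms(3)] degree_vec_poly[OF assms(3)])
  then have "vec_poly n v = (vec_poly n v div g' * g') mod ?M" using hg by simp
  then show ?thesis using assms(2,4) unfolding cyclic_code_def by blast
qed

end

context
  fixes emb :: "'f::field \<Rightarrow> 'e::field" and \<alpha> :: 'e and n :: nat
  assumes hom: "field_embedding emb"
    and an: "\<alpha> ^ n = 1" and prim: "\<forall>k. 0 < k \<and> k < n \<longrightarrow> \<alpha> ^ k \<noteq> 1"
    and nz: "(of_nat n :: 'e) \<noteq> 0"
begin

lemma npos: "0 < n" using nz by (cases n) auto

lemma roots_fin: "finite (roots_set \<alpha> n)"
  unfolding roots_set_def by simp

lemma roots_pow: "\<beta> \<in> roots_set \<alpha> n \<Longrightarrow> \<beta> ^ n = 1"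
  unfolding roots_set_def using an pow_swap[of \<alpha> _ n] by auto

lemma dual_zero:
  assumes Asub: "A \<subseteq> roots_set \<alpha> n"
    and g: "map_poly emb g' = (\<Prod>\<beta>\<in>A. [:-\<beta>, 1:])"
    and x: "x \<in> dual_code n (cyclic_code emb n A)"
    and k: "k < n" "\<alpha> ^ k \<notin> A"
  shows "ev emb n x (inverse \<alpha> ^ k) = 0"
proof -
  let ?M = "monom 1 n - 1 :: 'f poly"
  let ?G = "\<Prod>\<beta>\<in>A. [:-\<beta>, 1:]"
  define P where "P s = (monom 1 s * g') mod ?M" for s
  have finA: "finite A" using Asub roots_fin finite_subset by blast
  have degP: "degree (P s) < n" for s unfolding P_def by (rule degree_mod_M[OF npos])
  have cs: "(\<lambda>i. coeff (P s) i) \<in> cyclic_code emb n A" for s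
  proof -
    have "(\<lambda>i. coeff (P s) i) \<in> vecs n"
      unfolding vecs_def using degP[of s] by (auto simp: coeff_eq_0)
    moreover have "vec_poly n (\<lambda>i. coeff (P s) i) = (monom 1 s * g') mod ?M"
      using vec_poly_coeff[OF degP[of s]] unfolding P_def .
    ultimately show ?thesis unfolding cyclic_code_def using g by blast
  qed
  have orth_s: "(\<Sum>i<n. x i * coeff (P s) i) = 0" for s
    using x cs[of s] unfolding dual_code_def by blast
  have evP: "poly (map_poly emb (P s)) (\<alpha> ^ k') = (\<alpha> ^ k') ^ s * poly ?G (\<alpha> ^ k')" for s k'
  proof -
    have e: "monom 1 s * g' = (monom 1 s * g') div ?M * ?M + P s"
      unfolding P_def by (simp add: div_mult_mod_eq)
    have "(\<alpha> ^ k') ^ n = 1" using an pow_swap[of \<alpha> k' n] by simp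
    then have "poly (map_poly emb ((monom 1 s * g') div ?M * ?M)) (\<alpha> ^ k') = 0"
      by (simp add: mp_mult[OF hom] poly_M[OF hom])
    then show ?thesis
      using arg_cong[OF e, of "\<lambda>p. poly (map_poly emb p) (\<alpha> ^ k')"]
      by (simp add: mp_add[OF hom] mp_mult[OF hom] mp_monom[OF hom] emb_1[OF hom] poly_monom g)
  qed
  define F where "F s k' = (\<alpha> ^ k') ^ s * poly ?G (\<alpha> ^ k')" for s k'
  have coeffP: "emb (coeff (P s) i) = (\<Sum>k'<n. F s k' * inverse \<alpha> ^ (i * k')) / of_nat n"
    if "i < n" for s i
  proof -
    have "emb (coeff (P s) i) = (\<Sum>k'<n. (\<Sum>i'<n. emb (coeff (P s) i') * \<alpha> ^ (i' * k')) * inverse \<alpha> ^ (i * k')) / of_nat n"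
      by (rule dft_expand[OF an prim nz that])
    also have "\<dots> = (\<Sum>k'<n. F s k' * inverse \<alpha> ^ (i * k')) / of_nat n"
    proof -
      have "(\<Sum>i'<n. emb (coeff (P s) i') * \<alpha> ^ (i' * k')) = F s k'" for k'
      proof -
        have "(\<Sum>i'<n. emb (coeff (P s) i') * \<alpha> ^ (i' * k')) = poly (map_poly emb (P s)) (\<alpha> ^ k')"
          using poly_lt[of "map_poly emb (P s)" n "\<alpha> ^ k'"] degP[of s]
          by (simp add: mp_degree[OF hom] coeff_mp[OF hom] pow_mult_swap[of \<alpha>])
        then show ?thesis using evP unfolding F_def by simp
      qed
      then show ?thesis by simp
    qed
    finally show ?thesis .
  qed
  define Y where "Y k' = poly ?G (\<alpha> ^ k') * ev emb n x (inverse \<alpha> ^ k')" for k'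
  have Yz: "(\<Sum>k'<n. Y k' * \<alpha> ^ (k' * s)) = 0" if "s < n" for s
  proof -
    have "0 = emb (\<Sum>i<n. x i * coeff (P s) i)" using orth_s[of s] by (simp add: emb_0[OF hom])
    also have "\<dots> = (\<Sum>i<n. emb (x i) * ((\<Sum>k'<n. F s k' * inverse \<alpha> ^ (i * k')) / of_nat n))"
      by (simp add: emb_sum[OF hom] emb_mult[OF hom] coeffP)
    also have "\<dots> = (\<Sum>i<n. \<Sum>k'<n. emb (x i) * (F s k' * inverse \<alpha> ^ (i * k'))) / of_nat n"
      by (simp add: sum_divide_distrib sum_distrib_left)
    also have "\<dots> = (\<Sum>k'<n. \<Sum>i<n. emb (x i) * (F s k' * inverse \<alpha> ^ (i * k'))) / of_nat n"
      by (subst sum.swap) (rule refl)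
    also have "\<dots> = (\<Sum>k'<n. Y k' * \<alpha> ^ (k' * s)) / of_nat n"
    proof -
      have "(\<Sum>i<n. emb (x i) * (F s k' * inverse \<alpha> ^ (i * k'))) = Y k' * \<alpha> ^ (k' * s)" for k'
        unfolding Y_def F_def ev_def sum_distrib_left sum_distrib_right
        by (intro sum.cong refl) (simp add: pow_mult_swap[of "inverse \<alpha>"] pow_mult_swap[of \<alpha> k' s] mult_ac pow_swap[of \<alpha> s k'])
      then show ?thesis by simp
    qed
    finally show ?thesis using nz by simp
  qed
  have "Y k = 0" by (rule dft_zero[OF an prim nz]) (use Yz k in auto)
  moreover have "poly ?G (\<alpha> ^ k) \<noteq> 0" using finA k by (auto simp: poly_prod)
  ultimately show ?thesis unfolding Y_def by simp
qed

end

lemma md_le: "x \<in> C \<Longrightarrow> y \<in> C \<Longrightarrow> x \<noteq> y \<Longrightarrow> min_dist n C \<le> enat (hamming n x y)"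
  unfolding min_dist_def by (rule INF_lower2[of x]) (auto intro: INF_lower)

lemma md_ge: "(\<And>x y. x \<in> C \<Longrightarrow> y \<in> C \<Longrightarrow> x \<noteq> y \<Longrightarrow> d \<le> hamming n x y) \<Longrightarrow> enat d \<le> min_dist n C"
  unfolding min_dist_def by (intro INF_greatest) auto

lemma md_attain: assumes "min_dist n C = enat d" shows "\<exists>x\<in>C. \<exists>y\<in>C. x \<noteq> y \<and> hamming n x y = d"
proof (rule ccontr)
  assume "\<not> ?thesis"
  then have "Suc d \<le> hamming n x y" if "x \<in> C" "y \<in> C" "x \<noteq> y" for x y
    using md_le[OF that, of n] assms that by force
  then have "enat (Suc d) \<le> min_dist n C" by (rule md_ge)
  then show False using assms by simp
qed

lemma modA: fixes a s n :: nat assumes "s < n" "a < n" shows "((a + s) mod n + (n - s)) mod n = a"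
proof -
  have "((a + s) mod n + (n - s)) mod n = (a + s + (n - s)) mod n" by (rule mod_add_left_eq)
  also have "a + s + (n - s) = a + n" using assms by simp
  finally show ?thesis using assms by simp
qed

lemma modB: fixes a s n :: nat assumes "s < n" "a < n" shows "((a + (n - s)) mod n + s) mod n = a"
proof -
  have "((a + (n - s)) mod n + s) mod n = (a + (n - s) + s) mod n" by (rule mod_add_left_eq)
  also have "a + (n - s) + s = a + n" using assms by simp
  finally show ?thesis using assms by simp
qed

definition rot :: "nat \<Rightarrow> nat \<Rightarrow> (nat \<Rightarrow> 'a::zero) \<Rightarrow> nat \<Rightarrow> 'a" where
  "rot n s w = (\<lambda>j. if j < n then w ((j + s) mod n) else 0)"

lemma rot_card: fixes s n :: nat assumes "s < n" shows "card {j. j < n \<and> rot n s w j \<noteq> 0} = card {i. i < n \<and> w i \<noteq> 0}"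
proof -
  have n0: "0 < n" using assms by simp
  have "bij_betw (\<lambda>j. (j + s) mod n) {j. j < n \<and> rot n s w j \<noteq> 0} {i. i < n \<and> w i \<noteq> 0}"
  proof (rule bij_betw_byWitness[where f' = "\<lambda>i. (i + (n - s)) mod n"])
    show "\<forall>a\<in>{j. j < n \<and> rot n s w j \<noteq> 0}. ((a + s) mod n + (n - s)) mod n = a"
      using assms modA by blast
    show "\<forall>a\<in>{i. i < n \<and> w i \<noteq> 0}. ((a + (n - s)) mod n + s) mod n = a"
      using assms modB by blast
    show "(\<lambda>j. (j + s) mod n) ` {j. j < n \<and> rot n s w j \<noteq> 0} \<subseteq> {i. i < n \<and> w i \<noteq> 0}"
    proof
      fix i assume "i \<in> (\<lambda>j. (j + s) mod n) ` {j. j < n \<and> rot n s w j \<noteq> 0}"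
      then obtain j where j: "j < n" "rot n s w j \<noteq> 0" "i = (j + s) mod n" by blast
      then show "i \<in> {i. i < n \<and> w i \<noteq> 0}" using n0 unfolding rot_def by simp
    qed
    show "(\<lambda>i. (i + (n - s)) mod n) ` {i. i < n \<and> w i \<noteq> 0} \<subseteq> {j. j < n \<and> rot n s w j \<noteq> 0}"
    proof
      fix j assume "j \<in> (\<lambda>i. (i + (n - s)) mod n) ` {i. i < n \<and> w i \<noteq> 0}"
      then obtain i where i: "i < n" "w i \<noteq> 0" "j = (i + (n - s)) mod n" by blast
      have "(j + s) mod n = i" using i(1,3) modB[OF assms i(1)] by simp
      then show "j \<in> {j. j < n \<and> rot n s w j \<noteq> 0}" using n0 i unfolding rot_def by simp
    qed
  qed
  then show ?thesis by (rule bij_betw_same_card)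
qed

context
  fixes emb :: "'f::field \<Rightarrow> 'e::field"
  assumes hom: "field_embedding emb"
begin

lemma ev_diff: "ev emb n (\<lambda>j. x j - y j) \<delta> = ev emb n x \<delta> - ev emb n y \<delta>"
  unfolding ev_def by (simp add: emb_diff[OF hom] left_diff_distrib sum_subtractf)

lemma ev_zero: "ev emb n (\<lambda>j. 0) \<delta> = 0"
  unfolding ev_def by (simp add: emb_0[OF hom])

lemma ev_rot: assumes "\<delta> ^ n = 1" "s < n"
  shows "ev emb n (rot n s w) \<delta> = \<delta> ^ (n - s) * ev emb n w \<delta>"
proof -
  have "ev emb n (rot n s w) \<delta> = (\<Sum>j<n. emb (w ((j + s) mod n)) * \<delta> ^ j)"
    unfolding ev_def rot_def by simp
  also have "\<dots> = (\<Sum>i<n. emb (w i) * \<delta> ^ ((i + (n - s)) mod n))"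
  proof (rule sum.reindex_bij_witness[where j = "\<lambda>j. (j + s) mod n" and i = "\<lambda>i. (i + (n - s)) mod n"])
    fix a assume "a \<in> {..<n}"
    then show "((a + s) mod n + (n - s)) mod n = a" using assms modA by blast
    show "emb (w ((a + s) mod n)) * \<delta> ^ (((a + s) mod n + (n - s)) mod n) = emb (w ((a + s) mod n)) * \<delta> ^ a"
      using \<open>a \<in> _\<close> assms modA by simp
  next
    fix b assume "b \<in> {..<n}"
    then show "((b + (n - s)) mod n + s) mod n = b" using assms modB by blast
  qed (use assms in auto)
  also have "\<dots> = (\<Sum>i<n. emb (w i) * (\<delta> ^ i * \<delta> ^ (n - s)))"
    by (simp add: pow_mod_n[OF assms(1)] power_add)
  also have "\<dots> = \<delta> ^ (n - s) * ev emb n w \<delta>"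
    unfolding ev_def sum_distrib_left by (simp add: mult_ac)
  finally show ?thesis .
qed

context
  fixes \<alpha> :: 'e and n :: nat
  assumes an: "\<alpha> ^ n = 1" and prim: "\<forall>k. 0 < k \<and> k < n \<longrightarrow> \<alpha> ^ k \<noteq> 1"
    and nz: "(of_nat n :: 'e) \<noteq> 0"
begin

lemma star_zero:
  assumes Bsub: "B \<subseteq> roots_set \<alpha> n"
    and Zx: "\<forall>k<n. \<alpha> ^ k \<notin> A \<longrightarrow> ev emb n x (inverse \<alpha> ^ k) = 0"
    and Zc: "\<forall>\<beta>\<in>set_prod A B. ev emb n c \<beta> = 0"
    and \<gamma>: "\<gamma> \<in> B"
  shows "ev emb n (\<lambda>i. x i * c i) \<gamma> = 0"
proof -
  obtain b where b: "b < n" "\<gamma> = \<alpha> ^ b" using Bsub \<gamma> unfolding roots_set_def by auto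
  have anz: "\<alpha> \<noteq> 0" by (rule a_nz[OF an prim nz])
  define E where "E k = ev emb n c (\<alpha> ^ k)" for k
  have cexp: "emb (c i) = (\<Sum>k<n. E k * inverse \<alpha> ^ (i * k)) / of_nat n" if "i < n" for i
  proof -
    have "emb (c i) = (\<Sum>k<n. (\<Sum>i'<n. emb (c i') * \<alpha> ^ (i' * k)) * inverse \<alpha> ^ (i * k)) / of_nat n"
      by (rule dft_expand[OF an prim nz that])
    also have "\<dots> = (\<Sum>k<n. E k * inverse \<alpha> ^ (i * k)) / of_nat n"
      unfolding E_def ev_def by (simp add: pow_mult_swap[of \<alpha>])
    finally show ?thesis .
  qed
  have "ev emb n (\<lambda>i. x i * c i) \<gamma> = (\<Sum>i<n. emb (x i) * ((\<Sum>k<n. E k * inverse \<alpha> ^ (i * k)) / of_nat n) * \<gamma> ^ i)"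
    unfolding ev_def by (intro sum.cong refl) (simp add: emb_mult[OF hom] cexp)
  also have "\<dots> = (\<Sum>i<n. \<Sum>k<n. emb (x i) * (E k * inverse \<alpha> ^ (i * k)) * \<gamma> ^ i) / of_nat n"
    by (simp add: sum_divide_distrib sum_distrib_left sum_distrib_right)
  also have "\<dots> = (\<Sum>k<n. \<Sum>i<n. emb (x i) * (E k * inverse \<alpha> ^ (i * k)) * \<gamma> ^ i) / of_nat n"
    by (subst sum.swap) (rule refl)
  also have "\<dots> = (\<Sum>k<n. E k * ev emb n x (\<gamma> * inverse \<alpha> ^ k)) / of_nat n"
    unfolding ev_def sum_distrib_left
    by (intro arg_cong[where f = "\<lambda>t. t / _"] sum.cong refl) (simp add: power_mult_distrib pow_mult_swap[of "inverse \<alpha>"] pow_swap[of "inverse \<alpha>"] mult_ac)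
  also have "\<dots> = 0"
  proof -
    have "E k * ev emb n x (\<gamma> * inverse \<alpha> ^ k) = 0" if k: "k < n" for k
    proof (cases "\<alpha> ^ k \<in> set_prod A B")
      case True
      then show ?thesis using Zc unfolding E_def by simp
    next
      case False
      define m where "m = (k + n - b) mod n"
      have mn: "m < n" unfolding m_def using k by simp
      have am: "\<alpha> ^ m = \<alpha> ^ (k + n - b)" unfolding m_def by (rule pow_mod_n[OF an])
      have amb: "\<alpha> ^ m * \<gamma> = \<alpha> ^ k"
      proof -
        have "\<alpha> ^ m * \<gamma> = \<alpha> ^ (k + n - b) * \<alpha> ^ b" using am b by simp
        also have "\<dots> = \<alpha> ^ (k + n - b + b)" by (rule power_add[symmetric])
        also have "k + n - b + b = k + n" using b k by simp
        finally show ?thesis using an by (simp add: power_add)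
      qed
      have "\<alpha> ^ m \<notin> A"
      proof
        assume "\<alpha> ^ m \<in> A"
        moreover have "\<alpha> ^ k = \<alpha> ^ m * \<gamma>" using amb by simp
        ultimately have "\<alpha> ^ k \<in> set_prod A B" using \<gamma> unfolding set_prod_def by blast
        then show False using False by simp
      qed
      then have "ev emb n x (inverse \<alpha> ^ m) = 0" using Zx mn by blast
      moreover have "inverse \<alpha> ^ m = \<gamma> * inverse \<alpha> ^ k"
      proof -
        have gnz: "\<gamma> \<noteq> 0" using b anz by simp
        have "\<gamma> * inverse \<alpha> ^ k = \<gamma> * inverse (\<alpha> ^ m * \<gamma>)" using amb by (simp add: power_inverse)
        also have "\<dots> = inverse (\<alpha> ^ m)" using gnz by (simp add: inverse_mult_distrib)
        finally show ?thesis by (simp add: power_inverse)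
      qed
      ultimately show ?thesis by simp
    qed
    then have "(\<Sum>k<n. E k * ev emb n x (\<gamma> * inverse \<alpha> ^ k)) = 0" by (intro sum.neutral) auto
    then show ?thesis by simp
  qed
  finally show ?thesis .
qed

end
end

theorem corollary3p5:
  fixes emb :: "'f::{finite,field} \<Rightarrow> 'e::{finite,field}"
    and q n :: nat and \<alpha> :: 'e and A B :: "'e set" and dA dB :: nat
  assumes q_def: "q = card (UNIV :: 'f set)"
    and n_pos: "0 < n"
    and cop: "coprime n q"
    and ext: "card (UNIV :: 'e set) = q ^ ord n q"
    and emb: "field_embedding emb"
    and prim: "\<alpha> ^ n = 1" "\<forall>k. 0 < k \<and> k < n \<longrightarrow> \<alpha> ^ k \<noteq> 1"
    and A_sub: "A \<subseteq> roots_set \<alpha> n" and B_sub: "B \<subseteq> roots_set \<alpha> n"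
    and A_cyc: "cyclotomic_union q n (exps \<alpha> n A)"
    and B_cyc: "cyclotomic_union q n (exps \<alpha> n B)"
    and dA: "min_dist n (dual_code n (cyclic_code emb n A)) = enat dA"
    and dB: "min_dist n (cyclic_code emb n B) = enat dB"
    and gt: "dA > dB"
  shows "cyclotomic_union q n (exps \<alpha> n (set_prod A B))
    \<and> has_locality n (cyclic_code emb n (set_prod A B)) (dA - dB + 1) dB"
proof -
  have nz: "(of_nat n :: 'e) \<noteq> 0"
  proof
    assume h: "(of_nat n :: 'e) = 0"
    then have "emb (of_nat n) = 0" by (simp add: emb_of_nat[OF emb])
    then have "(of_nat n :: 'f) = 0" by (simp add: emb_eq_0[OF emb])
    then have "CHAR('f) dvd n" by (simp add: of_nat_eq_0_iff_char_dvd)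
    moreover have "CHAR('f) dvd q" using q_def CHAR_dvd_CARD by simp
    ultimately have "CHAR('f) = 1" using cop coprime_common_divisor_nat by blast
    then have "(of_nat 1 :: 'f) = 0" using of_nat_CHAR by metis
    then show False by simp
  qed
  note rp = roots_pow[OF emb prim nz]
  have finR: "finite (roots_set \<alpha> n)" unfolding roots_set_def by simp
  have finA: "finite A" using A_sub finR finite_subset by blast
  have finB: "finite B" using B_sub finR finite_subset by blast
  have finAB: "finite (set_prod A B)"
  proof -
    have "set_prod A B \<subseteq> (\<lambda>p. fst p * snd p) ` (A \<times> B)" unfolding set_prod_def by force
    then show ?thesis using finA finB finite_subset by blast
  qed
  have ABpow: "\<forall>\<beta>\<in>set_prod A B. \<beta> ^ n = 1"
  proof
    fix \<beta> assume "\<beta> \<in> set_prod A B"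
    then obtain a c where ac: "\<beta> = a * c" "a \<in> A" "c \<in> B" unfolding set_prod_def by blast
    have "a ^ n = 1" using rp A_sub ac(2) by blast
    moreover have "c ^ n = 1" using rp B_sub ac(3) by blast
    ultimately show "\<beta> ^ n = 1" using ac(1) by (simp add: power_mult_distrib)
  qed
  have amod: "\<alpha> ^ (m mod n) = \<alpha> ^ m" for m by (rule pow_mod_n[OF prim(1)])
  have part1: "cyclotomic_union q n (exps \<alpha> n (set_prod A B))"
    unfolding cyclotomic_union_def
  proof (intro conjI ballI)
    show "exps \<alpha> n (set_prod A B) \<subseteq> {..<n}" unfolding exps_def by auto
  next
    fix j assume "j \<in> exps \<alpha> n (set_prod A B)"
    then obtain \<beta> \<gamma> where j: "j < n" "\<alpha> ^ j = \<beta> * \<gamma>" "\<beta> \<in> A" "\<gamma> \<in> B"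
      unfolding exps_def set_prod_def by blast
    obtain a where a: "a < n" "\<beta> = \<alpha> ^ a" using j(3) A_sub unfolding roots_set_def by blast
    obtain b where b: "b < n" "\<gamma> = \<alpha> ^ b" using j(4) B_sub unfolding roots_set_def by blast
    have "a \<in> exps \<alpha> n A" using a j(3) unfolding exps_def by simp
    then have "(q * a) mod n \<in> exps \<alpha> n A" using A_cyc unfolding cyclotomic_union_def by blast
    then have qa: "\<alpha> ^ (q * a) \<in> A" unfolding exps_def using amod by simp
    have "b \<in> exps \<alpha> n B" using b j(4) unfolding exps_def by simp
    then have "(q * b) mod n \<in> exps \<alpha> n B" using B_cyc unfolding cyclotomic_union_def by blast
    then have qb: "\<alpha> ^ (q * b) \<in> B" unfolding exps_def using amod by simp
    have "\<alpha> ^ ((q * j) mod n) = (\<alpha> ^ j) ^ q" by (simp add: amod pow_mult_swap)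
    also have "\<dots> = \<alpha> ^ (q * a) * \<alpha> ^ (q * b)"
      using j(2) a b by (simp add: power_mult_distrib pow_mult_swap)
    finally have "\<alpha> ^ ((q * j) mod n) \<in> set_prod A B"
      using qa qb unfolding set_prod_def by blast
    then show "(q * j) mod n \<in> exps \<alpha> n (set_prod A B)"
      unfolding exps_def using n_pos by simp
  qed
  have part2: "has_locality n (cyclic_code emb n (set_prod A B)) (dA - dB + 1) dB"
  proof (cases "dB = 0")
    case True
    show ?thesis unfolding has_locality_def
    proof (intro allI impI)
      fix i assume "i < n"
      then show "\<exists>S\<subseteq>{..<n}. i \<in> S \<and> card S \<le> dA - dB + 1 + dB - 1 \<and>
          enat dB \<le> min_dist n (puncture (cyclic_code emb n (set_prod A B)) S)"
        using True gt by (intro exI[of _ "{i}"]) (auto simp: zero_enat_def[symmetric])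
    qed
  next
    case False
    then have dB1: "1 \<le> dB" by simp
    obtain cb1 cb2 where "cb1 \<in> cyclic_code emb n B" using md_attain[OF dB] by blast
    then obtain gB where gB: "map_poly emb gB = (\<Prod>\<beta>\<in>B. [:-\<beta>, 1:])"
      unfolding cyclic_code_def by blast
    have "cyclic_code emb n A \<noteq> {}"
    proof
      assume emp: "cyclic_code emb n A = {}"
      then have dual: "dual_code n (cyclic_code emb n A) = vecs n" unfolding dual_code_def by simp
      let ?e = "(\<lambda>j. if j = 0 then 1 else 0) :: nat \<Rightarrow> 'f"
      let ?o = "(\<lambda>j. 0) :: nat \<Rightarrow> 'f"
      have "?o \<in> vecs n" "?e \<in> vecs n" unfolding vecs_def using n_pos by auto
      moreover have "?o \<noteq> ?e" by (metis one_neq_zero)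
      ultimately have "min_dist n (vecs n :: (nat \<Rightarrow> 'f) set) \<le> enat (hamming n ?o ?e)" by (rule md_le)
      moreover have "hamming n ?o ?e = 1"
      proof -
        have "{i. i < n \<and> ?o i \<noteq> ?e i} = {0}" using n_pos by auto
        then show ?thesis unfolding hamming_def by simp
      qed
      ultimately have "enat dA \<le> 1" using dA dual by (simp add: one_enat_def)
      then show False using gt dB1 by (simp add: one_enat_def)
    qed
    then obtain ca where "ca \<in> cyclic_code emb n A" by blast
    then obtain gA where gA: "map_poly emb gA = (\<Prod>\<beta>\<in>A. [:-\<beta>, 1:])"
      unfolding cyclic_code_def by blast
    obtain x1 x2 where x12: "x1 \<in> dual_code n (cyclic_code emb n A)" "x2 \<in> dual_code n (cyclic_code emb n A)"
      "x1 \<noteq> x2" "hamming n x1 x2 = dA"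
      using md_attain[OF dA] by blast
    define w where "w = (\<lambda>j. x1 j - x2 j)"
    have wv: "w \<in> vecs n" using x12 unfolding w_def dual_code_def vecs_def by auto
    have wZ: "ev emb n w (inverse \<alpha> ^ k) = 0" if "k < n" "\<alpha> ^ k \<notin> A" for k
      unfolding w_def ev_diff[OF emb]
      using dual_zero[OF emb prim nz A_sub gA x12(1) that] dual_zero[OF emb prim nz A_sub gA x12(2) that]
      by simp
    have wsupp: "{j. j < n \<and> w j \<noteq> 0} = {j. j < n \<and> x1 j \<noteq> x2 j}" unfolding w_def by auto
    have wcard: "card {j. j < n \<and> w j \<noteq> 0} = dA" using wsupp x12(4) unfolding hamming_def by simp
    then obtain t where t: "t < n" "w t \<noteq> 0" using gt
      by (metis (mono_tags, lifting) Collect_empty_eq card.empty less_nat_zero_code)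
    show ?thesis unfolding has_locality_def
    proof (intro allI impI)
      fix i assume i: "i < n"
      define s where "s = (t + n - i) mod n"
      have sn: "s < n" unfolding s_def using n_pos by simp
      define x where "x = rot n s w"
      define S where "S = {j. j < n \<and> x j \<noteq> 0}"
      have "(i + s) mod n = t"
      proof -
        have "(i + s) mod n = (i + (t + n - i)) mod n" unfolding s_def by (simp add: mod_add_right_eq)
        also have "i + (t + n - i) = t + n" using i by simp
        finally show ?thesis using t by simp
      qed
      then have iS: "i \<in> S" unfolding S_def x_def rot_def using i t by simp
      have Scard: "card S = dA" unfolding S_def x_def using rot_card[OF sn, of w] wcard by (rule trans)
      have xv: "x \<in> vecs n" unfolding x_def rot_def vecs_def by simp
      have xZ: "\<forall>k<n. \<alpha> ^ k \<notin> A \<longrightarrow> ev emb n x (inverse \<alpha> ^ k) = 0"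
      proof (intro allI impI)
        fix k assume k: "k < n" "\<alpha> ^ k \<notin> A"
        have "(inverse \<alpha> ^ k) ^ n = 1" using prim(1) pow_swap[of "inverse \<alpha>" k n]
          by (simp add: power_inverse)
        then show "ev emb n x (inverse \<alpha> ^ k) = 0"
          unfolding x_def using ev_rot[OF emb _ sn] wZ k by simp
      qed
      have md: "enat dB \<le> min_dist n (puncture (cyclic_code emb n (set_prod A B)) S)"
      proof (rule md_ge)
        fix u u' assume u: "u \<in> puncture (cyclic_code emb n (set_prod A B)) S"
          and u': "u' \<in> puncture (cyclic_code emb n (set_prod A B)) S" and uu: "u \<noteq> u'"
        obtain c where c: "c \<in> cyclic_code emb n (set_prod A B)" "u = (\<lambda>j. if j \<in> S then c j else 0)"
          using u unfolding puncture_def by blast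
        obtain c' where c': "c' \<in> cyclic_code emb n (set_prod A B)" "u' = (\<lambda>j. if j \<in> S then c' j else 0)"
          using u' unfolding puncture_def by blast
        define d where "d = (\<lambda>j. c j - c' j)"
        have dZ: "\<forall>\<beta>\<in>set_prod A B. ev emb n d \<beta> = 0"
          unfolding d_def ev_diff[OF emb]
          using code_zero[OF emb finAB ABpow c(1)] code_zero[OF emb finAB ABpow c'(1)] by simp
        define z where "z = (\<lambda>j. x j * d j)"
        have zv: "z \<in> vecs n" using xv unfolding z_def vecs_def by simp
        have zZ: "\<forall>\<gamma>\<in>B. ev emb n z \<gamma> = 0"
          unfolding z_def using star_zero[OF emb prim nz B_sub xZ dZ] by blast
        have zC: "z \<in> cyclic_code emb n B" by (rule code_mem[OF emb finB gB n_pos zv zZ])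
        have zeroC: "(\<lambda>j. 0) \<in> cyclic_code emb n B"
          by (rule code_mem[OF emb finB gB n_pos]) (auto simp: vecs_def ev_zero[OF emb])
        have zset: "{j. j < n \<and> z j \<noteq> 0} = {j. j < n \<and> u j \<noteq> u' j}"
          unfolding z_def d_def c(2) c'(2) S_def by auto
        have "z \<noteq> (\<lambda>j. 0)"
        proof
          assume z0: "z = (\<lambda>j. 0)"
          obtain j where "u j \<noteq> u' j" using uu by blast
          moreover have "j < n"
          proof (rule ccontr)
            assume "\<not> j < n"
            then have "j \<notin> S" unfolding S_def by simp
            then show False using \<open>u j \<noteq> u' j\<close> c(2) c'(2) by simp
          qed
          ultimately have "j \<in> {j. j < n \<and> z j \<noteq> 0}" using zset by blast
          then show False using z0 by simp
        qed
        then have "min_dist n (cyclic_code emb n B) \<le> enat (hamming n z (\<lambda>j. 0))"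
          by (rule md_le[OF zC zeroC])
        then have "dB \<le> hamming n z (\<lambda>j. 0)" using dB by simp
        also have "hamming n z (\<lambda>j. 0) = hamming n u u'"
          unfolding hamming_def using zset by simp
        finally show "dB \<le> hamming n u u'" .
      qed
      show "\<exists>S\<subseteq>{..<n}. i \<in> S \<and> card S \<le> dA - dB + 1 + dB - 1 \<and>
          enat dB \<le> min_dist n (puncture (cyclic_code emb n (set_prod A B)) S)"
        using iS Scard md gt by (intro exI[of _ S]) (auto simp: S_def)
    qed
  qed
  show ?thesis using part1 part2 by blast
qed

end
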